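(* Let $G$ be a simple graph and $W\subseteq V(G)$, and let $\varphi'$ be an assignment of the colors $I,F$ to the vertices of $W$ that is a near-bipartite coloring of $G[W]$. Suppose $G-W$ is a forest in which every vertex has degree 3 in $G$. If every component $T$ of $G-W$ is $F$-odd or $F$-leaf-good, then $\varphi'$ extends to a near-bipartite coloring of $G$.
   Context: A near-bipartite coloring is a partition into $I,F$ with $I$ independent and the subgraph induced by $F$ a forest. An $F$-edge is an edge joining a vertex of $G-W$ to a vertex of $W$ colored $F$ by $\varphi'$. A component $T$ of $G-W$ is $F$-odd if the number of $F$-edges incident to $V(T)$ is odd, and $F$-leaf-good if some leaf of $T$ (vertex of degree at most 1 in $T$) has at least two neighbors in $W$ colored $I$. *)

theory Defs
  imports Main
begin

definition simple_graph :: "'a set \<Rightarrow> ('a \<Rightarrow> 'a \<Rightarrow> bool) \<Rightarrow> bool" where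
  "simple_graph V E \<longleftrightarrow> finite V \<and> (\<forall>u v. E u v \<longrightarrow> u \<in> V \<and> v \<in> V)
     \<and> (\<forall>u v. E u v \<longrightarrow> E v u) \<and> (\<forall>v. \<not> E v v)"

datatype color = CI | CF

definition has_cycle_in :: "('a \<Rightarrow> 'a \<Rightarrow> bool) \<Rightarrow> 'a set \<Rightarrow> bool" where
  "has_cycle_in E S \<longleftrightarrow> (\<exists>cs. length cs \<ge> 3 \<and> distinct cs \<and> set cs \<subseteq> S
     \<and> (\<forall>i. Suc i < length cs \<longrightarrow> E (cs ! i) (cs ! Suc i))
     \<and> E (last cs) (hd cs))"

definition induces_forest :: "('a \<Rightarrow> 'a \<Rightarrow> bool) \<Rightarrow> 'a set \<Rightarrow> bool" where
  "induces_forest E S \<longleftrightarrow> \<not> has_cycle_in E S"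

definition independent :: "('a \<Rightarrow> 'a \<Rightarrow> bool) \<Rightarrow> 'a set \<Rightarrow> bool" where
  "independent E S \<longleftrightarrow> (\<forall>u\<in>S. \<forall>v\<in>S. \<not> E u v)"

definition near_bipartite_on :: "('a \<Rightarrow> 'a \<Rightarrow> bool) \<Rightarrow> 'a set \<Rightarrow> ('a \<Rightarrow> color) \<Rightarrow> bool" where
  "near_bipartite_on E S col \<longleftrightarrow>
     independent E {v \<in> S. col v = CI} \<and> induces_forest E {v \<in> S. col v = CF}"

definition degree :: "'a set \<Rightarrow> ('a \<Rightarrow> 'a \<Rightarrow> bool) \<Rightarrow> 'a \<Rightarrow> nat" where
  "degree V E v = card {u \<in> V. E v u}"

definition reach_in :: "('a \<Rightarrow> 'a \<Rightarrow> bool) \<Rightarrow> 'a set \<Rightarrow> 'a \<Rightarrow> 'a \<Rightarrow> bool" where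
  "reach_in E S = (\<lambda>x y. x \<in> S \<and> y \<in> S \<and> E x y)\<^sup>*\<^sup>*"

definition components_of :: "('a \<Rightarrow> 'a \<Rightarrow> bool) \<Rightarrow> 'a set \<Rightarrow> 'a set set" where
  "components_of E S = {{y. reach_in E S x y} | x. x \<in> S}"

definition F_edges_count :: "('a \<Rightarrow> 'a \<Rightarrow> bool) \<Rightarrow> 'a set \<Rightarrow> ('a \<Rightarrow> color) \<Rightarrow> 'a set \<Rightarrow> nat" where
  "F_edges_count E W col T = card {(u, w). u \<in> T \<and> w \<in> W \<and> E u w \<and> col w = CF}"

definition F_odd :: "('a \<Rightarrow> 'a \<Rightarrow> bool) \<Rightarrow> 'a set \<Rightarrow> ('a \<Rightarrow> color) \<Rightarrow> 'a set \<Rightarrow> bool" where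
  "F_odd E W col T \<longleftrightarrow> odd (F_edges_count E W col T)"

definition F_leaf_good :: "('a \<Rightarrow> 'a \<Rightarrow> bool) \<Rightarrow> 'a set \<Rightarrow> ('a \<Rightarrow> color) \<Rightarrow> 'a set \<Rightarrow> bool" where
  "F_leaf_good E W col T \<longleftrightarrow>
     (\<exists>v\<in>T. card {u \<in> T. E v u} \<le> 1 \<and> card {w \<in> W. E v w \<and> col w = CI} \<ge> 2)"

end

theory Submission
  imports Defs
begin


lemma cycle_mono: "has_cycle_in E A \<Longrightarrow> A \<subseteq> B \<Longrightarrow> has_cycle_in E B"
  unfolding has_cycle_in_def by blast

lemma reach_sym:
  assumes "\<forall>u v. E u v \<longrightarrow> E v u" and "reach_in E S a b"
  shows "reach_in E S b a"
proof -
  have "symp (\<lambda>x y. x \<in> S \<and> y \<in> S \<and> E x y)" using assms(1) by (auto intro: sympI)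
  then show ?thesis using assms(2) unfolding reach_in_def by (metis sympD symp_rtranclp)
qed

lemma reach_trans: "reach_in E S a b \<Longrightarrow> reach_in E S b c \<Longrightarrow> reach_in E S a c"
  unfolding reach_in_def by auto

lemma reach_in_S: "reach_in E S a b \<Longrightarrow> a \<in> S \<Longrightarrow> b \<in> S"
  unfolding reach_in_def by (induction rule: rtranclp_induct) auto

lemma reach_step: "reach_in E S a b \<Longrightarrow> b \<in> S \<Longrightarrow> c \<in> S \<Longrightarrow> E b c \<Longrightarrow> reach_in E S a c"
  unfolding reach_in_def by (simp add: rtranclp.rtrancl_into_rtrancl)

lemma reach_mono: "reach_in E (S - {v}) a b \<Longrightarrow> reach_in E S a b"
  unfolding reach_in_def by (erule rtranclp_mono[THEN predicate2D, rotated]) auto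

lemma reach_first: "reach_in E S a b \<Longrightarrow> a \<noteq> b \<Longrightarrow> \<exists>z\<in>S. E a z"
  unfolding reach_in_def by (induction rule: converse_rtranclp_induct) auto

lemma reach_remove_leaf:
  assumes sym: "\<forall>u v. E u v \<longrightarrow> E v u" and irr: "\<forall>v. \<not> E v v"
    and uniq: "\<forall>a b. a \<in> S \<longrightarrow> b \<in> S \<longrightarrow> E v a \<longrightarrow> E v b \<longrightarrow> a = b"
    and r: "reach_in E S a b" and "a \<noteq> v" and "b \<noteq> v"
  shows "reach_in E (S - {v}) a b"
proof -
  have "(b \<noteq> v \<longrightarrow> reach_in E (S - {v}) a b) \<and> (b = v \<longrightarrow> (\<forall>u\<in>S. E v u \<longrightarrow> reach_in E (S - {v}) a u))"
    using r unfolding reach_in_def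
  proof (induction rule: rtranclp_induct)
    case base
    then show ?case using \<open>a \<noteq> v\<close> by auto
  next
    case (step b c)
    show ?case
    proof (cases "c = v")
      case True
      then have "b \<noteq> v" using step irr by auto
      then have rb: "(\<lambda>x y. x \<in> S - {v} \<and> y \<in> S - {v} \<and> E x y)\<^sup>*\<^sup>* a b" using step by auto
      have "E v b" using step True sym by auto
      have bS: "b \<in> S" using step by simp
      have "\<forall>u\<in>S. E v u \<longrightarrow> (\<lambda>x y. x \<in> S - {v} \<and> y \<in> S - {v} \<and> E x y)\<^sup>*\<^sup>* a u"
      proof (intro ballI impI)
        fix u assume "u \<in> S" "E v u"
        then have "u = b" using uniq bS \<open>E v b\<close> by blast
        then show "(\<lambda>x y. x \<in> S - {v} \<and> y \<in> S - {v} \<and> E x y)\<^sup>*\<^sup>* a u" using rb by simp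
      qed
      then show ?thesis using True by simp
    next
      case False
      show ?thesis
      proof (cases "b = v")
        case True
        then show ?thesis using step False by auto
      next
        case False
        then show ?thesis using step \<open>c \<noteq> v\<close>
          by (auto intro: rtranclp.rtrancl_into_rtrancl)
      qed
    qed
  qed
  then show ?thesis using \<open>b \<noteq> v\<close> unfolding reach_in_def by auto
qed



definition is_path :: "('a \<Rightarrow> 'a \<Rightarrow> bool) \<Rightarrow> 'a set \<Rightarrow> 'a \<Rightarrow> 'a list \<Rightarrow> bool" where
  "is_path E T x p \<longleftrightarrow> p \<noteq> [] \<and> hd p = x \<and> distinct p \<and> set p \<subseteq> T
     \<and> (\<forall>i. Suc i < length p \<longrightarrow> E (p ! i) (p ! Suc i))"

lemma leaf_exists:
  assumes fin: "finite T" and xT: "x \<in> T" and nc: "\<not> has_cycle_in E T" and irr: "\<forall>v. \<not> E v v"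
  shows "\<exists>v\<in>T. card {u\<in>T. E v u} \<le> 1 \<and> (v \<noteq> x \<or> (\<forall>u\<in>T. \<not> E x u))"
proof -
  have P0: "is_path E T x [x]" using xT unfolding is_path_def by auto
  have bnd: "\<forall>n. (\<exists>p. is_path E T x p \<and> length p = n) \<longrightarrow> n \<le> card T"
    unfolding is_path_def by (metis card_mono distinct_card fin)
  obtain n where n: "\<exists>p. is_path E T x p \<and> length p = n"
    and nmax: "\<forall>m. (\<exists>p. is_path E T x p \<and> length p = m) \<longrightarrow> m \<le> n"
    using Nat.ex_has_greatest_nat[of "\<lambda>n. \<exists>p. is_path E T x p \<and> length p = n", OF _ bnd] P0 by blast
  obtain p where p: "is_path E T x p" and lp: "length p = n" using n by blast
  define y where "y = last p"
  have pne: "p \<noteq> []" and hp: "hd p = x" and dp: "distinct p" and sp: "set p \<subseteq> T"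
    and ep: "\<forall>i. Suc i < length p \<longrightarrow> E (p ! i) (p ! Suc i)" using p unfolding is_path_def by auto
  have yT: "y \<in> T" using pne sp y_def by auto
  have ylast: "y = p ! (n - 1)" using pne lp y_def by (simp add: last_conv_nth)
  have n1: "n \<ge> 1" using pne lp by (cases p) auto
  have claim: "n \<ge> 2 \<and> z = p ! (n - 2)" if zT: "z \<in> T" and eyz: "E y z" for z
  proof (cases "z \<in> set p")
    case False
    have "is_path E T x (p @ [z])"
      unfolding is_path_def
    proof (intro conjI allI impI)
      show "hd (p @ [z]) = x" using pne hp by simp
      show "distinct (p @ [z])" using dp False by simp
      show "set (p @ [z]) \<subseteq> T" using sp zT by simp
      fix i assume i: "Suc i < length (p @ [z])"
      show "E ((p @ [z]) ! i) ((p @ [z]) ! Suc i)"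
      proof (cases "Suc i < length p")
        case True
        then show ?thesis using ep by (simp add: nth_append)
      next
        case False
        then have "i = n - 1" "Suc i = n" using i lp by auto
        then show ?thesis using eyz ylast lp by (simp add: nth_append)
      qed
    qed simp
    then have "Suc n \<le> n" using nmax lp by (metis length_append_singleton)
    then show ?thesis by simp
  next
    case True
    then obtain j where j: "j < n" "z = p ! j" using lp by (metis in_set_conv_nth)
    have jn1: "j \<noteq> n - 1" using j eyz ylast irr by metis
    moreover have "\<not> j < n - 2"
    proof
      assume jl: "j < n - 2"
      have "has_cycle_in E T"
        unfolding has_cycle_in_def
      proof (intro exI conjI allI impI)
        show "3 \<le> length (drop j p)" using jl lp by simp
        show "distinct (drop j p)" using dp by simp
        show "set (drop j p) \<subseteq> T" using sp by (meson in_set_dropD subsetD subsetI)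
        fix i assume "Suc i < length (drop j p)"
        then show "E (drop j p ! i) (drop j p ! Suc i)" using ep by auto
      next
        have "last (drop j p) = y" using y_def jl lp by simp
        moreover have "hd (drop j p) = z" using j lp by (simp add: hd_drop_conv_nth)
        ultimately show "E (last (drop j p)) (hd (drop j p))" using eyz by simp
      qed
      then show False using nc by simp
    qed
    ultimately have "j = n - 2" using j by linarith
    then show ?thesis using j jn1 by auto
  qed
  have "{u\<in>T. E y u} \<subseteq> {p ! (n - 2)}" using claim by auto
  then have c1: "card {u\<in>T. E y u} \<le> 1" using card_mono[of "{p ! (n - 2)}" "{u\<in>T. E y u}"] by simp
  have "y \<noteq> x \<or> (\<forall>u\<in>T. \<not> E x u)"
  proof (cases "n = 1")
    case True
    then have "y = x" using ylast hp pne by (simp add: hd_conv_nth)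
    then show ?thesis using claim True by fastforce
  next
    case False
    then have "y \<noteq> x" using ylast hp pne nth_eq_iff_index_eq[OF dp, of "n - 1" 0] lp n1 by (simp add: hd_conv_nth)
    then show ?thesis by simp
  qed
  then show ?thesis using c1 yT by blast
qed

lemma cycle_add:
  assumes nc: "\<not> has_cycle_in E S0" and sym: "\<forall>u v. E u v \<longrightarrow> E v u"
    and uniq: "\<forall>a b. a \<in> S0 \<longrightarrow> b \<in> S0 \<longrightarrow> E v a \<longrightarrow> E v b \<longrightarrow> a = b"
  shows "\<not> has_cycle_in E (insert v S0)"
proof
  assume "has_cycle_in E (insert v S0)"
  then obtain cs where l3: "length cs \<ge> 3" and dc: "distinct cs" and sc: "set cs \<subseteq> insert v S0"
    and ec: "\<forall>i. Suc i < length cs \<longrightarrow> E (cs ! i) (cs ! Suc i)" and el: "E (last cs) (hd cs)"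
    unfolding has_cycle_in_def by blast
  define n where "n = length cs"
  show False
  proof (cases "v \<in> set cs")
    case False
    then have "set cs \<subseteq> S0" using sc by auto
    then show False using nc l3 dc ec el unfolding has_cycle_in_def by blast
  next
    case True
    then obtain k where k: "k < n" "cs ! k = v" unfolding n_def by (metis in_set_conv_nth)
    have cne: "cs \<noteq> []" using l3 by auto
    have lastc: "last cs = cs ! (n - 1)" using cne n_def by (simp add: last_conv_nth)
    have hdc: "hd cs = cs ! 0" using cne by (simp add: hd_conv_nth)
    define a where "a = (k + 1) mod n"
    define b where "b = (k + n - 1) mod n"
    have an: "a < n" "b < n" using k unfolding a_def b_def by auto
    have n3: "n \<ge> 3" using l3 n_def by simp
    have a': "a = (if Suc k < n then Suc k else 0)"
    proof (cases "Suc k < n")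
      case True then show ?thesis unfolding a_def by simp
    next
      case False then have "Suc k = n" using k by simp
      then show ?thesis unfolding a_def using False by simp
    qed
    have b': "b = (if k = 0 then n - 1 else k - 1)"
    proof (cases "k = 0")
      case True then show ?thesis unfolding b_def using n3 by simp
    next
      case False then obtain k' where kk: "k = Suc k'" by (cases k) auto
      then show ?thesis unfolding b_def using False k by simp
    qed
    have ab: "a \<noteq> b" "a \<noteq> k" "b \<noteq> k" using k n3 a' b' by auto
    have Ea: "E v (cs ! a)"
    proof (cases "Suc k < n")
      case True
      then show ?thesis using ec k unfolding a_def n_def by auto
    next
      case False
      then have "k = n - 1" "a = 0" using k a' by auto
      then show ?thesis using el lastc hdc k by simp
    qed
    have Eb: "E v (cs ! b)"
    proof (cases "k = 0")
      case False
      then have "b = k - 1" using b' by auto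
      then have "E (cs ! b) v" using ec k False unfolding n_def by (metis Suc_pred' bot_nat_0.not_eq_extremum)
      then show ?thesis using sym by auto
    next
      case True
      then have "b = n - 1" using b' by auto
      then show ?thesis using el lastc hdc k True sym by simp
    qed
    have "cs ! a \<noteq> v" "cs ! b \<noteq> v" "cs ! a \<noteq> cs ! b" using dc an ab k unfolding n_def
      by (auto simp: nth_eq_iff_index_eq)
    moreover have "cs ! a \<in> insert v S0" "cs ! b \<in> insert v S0" using sc an unfolding n_def by (auto dest: nth_mem)
    ultimately have "cs ! a \<in> S0" "cs ! b \<in> S0" "cs ! a \<noteq> cs ! b" by auto
    then show False using uniq Ea Eb by blast
  qed
qed



lemma step:
  fixes V W :: "'a set" and E :: "'a \<Rightarrow> 'a \<Rightarrow> bool" and \<phi>' :: "'a \<Rightarrow> color"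
  assumes sg: "simple_graph V E"
    and WV: "W \<subseteq> V"
    and nb: "near_bipartite_on E W \<phi>'"
    and fo: "induces_forest E (V - W)"
    and dg: "\<forall>v \<in> V - W. degree V E v = 3"
    and cp: "\<forall>T \<in> components_of E (V - W). F_odd E W \<phi>' T \<or> F_leaf_good E W \<phi>' T"
    and ne: "V - W \<noteq> {}"
  shows "\<exists>v c. v \<in> V - W \<and> insert v W \<subseteq> V \<and> near_bipartite_on E (insert v W) (\<phi>'(v := c))
    \<and> induces_forest E (V - insert v W) \<and> (\<forall>u \<in> V - insert v W. degree V E u = 3)
    \<and> (\<forall>T \<in> components_of E (V - insert v W). F_odd E (insert v W) (\<phi>'(v := c)) T
          \<or> F_leaf_good E (insert v W) (\<phi>'(v := c)) T)"
proof -
  define S where "S = V - W"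
  have finV: "finite V" and inV: "\<forall>u v. E u v \<longrightarrow> u \<in> V \<and> v \<in> V"
    and sym: "\<forall>u v. E u v \<longrightarrow> E v u" and irr: "\<forall>v. \<not> E v v"
    using sg unfolding simple_graph_def by auto
  have finW: "finite W" using finV WV finite_subset by auto
  have finS: "finite S" using finV S_def by auto
  obtain x0 where x0: "x0 \<in> S" using ne S_def by auto
  define T where "T = {y. reach_in E S x0 y}"
  have TS: "T \<subseteq> S" using reach_in_S x0 T_def by auto
  have x0T: "x0 \<in> T" unfolding T_def reach_in_def by simp
  have finT: "finite T" using TS finS finite_subset by auto
  have Tcomp: "T \<in> components_of E S" unfolding components_of_def T_def using x0 by auto
  have Tclosed: "\<And>a b. a \<in> T \<Longrightarrow> b \<in> S \<Longrightarrow> E a b \<Longrightarrow> b \<in> T"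
  proof -
    fix a b assume ab: "a \<in> T" "b \<in> S" "E a b"
    then have r: "reach_in E S x0 a" unfolding T_def by simp
    have "a \<in> S" using reach_in_S[OF r x0] .
    then show "b \<in> T" unfolding T_def using reach_step[OF r _ ab(2,3)] by simp
  qed
  have Tchar: "\<And>a. a \<in> T \<Longrightarrow> {y. reach_in E S a y} = T"
  proof -
    fix a assume "a \<in> T"
    then have r: "reach_in E S x0 a" unfolding T_def by simp
    then have "reach_in E S a x0" using reach_sym sym by metis
    then show "{y. reach_in E S a y} = T" unfolding T_def using r reach_trans by metis
  qed
  have Tgood: "F_odd E W \<phi>' T \<or> F_leaf_good E W \<phi>' T" using cp Tcomp S_def by auto
  have ncT: "\<not> has_cycle_in E T" using fo TS cycle_mono S_def unfolding induces_forest_def by metis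
  obtain x where xT: "x \<in> T" and xgood: "F_leaf_good E W \<phi>' T \<longrightarrow>
      card {u\<in>T. E x u} \<le> 1 \<and> card {w \<in> W. E x w \<and> \<phi>' w = CI} \<ge> 2"
    using x0T unfolding F_leaf_good_def by blast
  obtain v where vT: "v \<in> T" and vleaf: "card {u\<in>T. E v u} \<le> 1"
    and vx: "v \<noteq> x \<or> (\<forall>u\<in>T. \<not> E x u)"
    using leaf_exists[OF finT xT ncT] irr by blast
  have vS: "v \<in> S" using vT TS by auto
  have vW: "v \<notin> W" using vS S_def by auto
  define NT where "NT = {u\<in>T. E v u}"
  have finNT: "finite NT" using finT NT_def by auto
  have NTS: "NT = {u\<in>S. E v u}" using Tclosed vT TS NT_def by auto
  have uniq: "\<forall>a b. a \<in> S \<longrightarrow> b \<in> S \<longrightarrow> E v a \<longrightarrow> E v b \<longrightarrow> a = b"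
    using vleaf finNT NTS NT_def card_le_Suc0_iff_eq[OF finNT] by auto
  have T1: "NT = {} \<Longrightarrow> T = {v}"
  proof -
    assume "NT = {}"
    have "y = v" if "y \<in> T" for y
    proof (rule ccontr)
      assume "y \<noteq> v"
      have "reach_in E S v y" using Tchar[OF vT] that by auto
      then obtain z where "z \<in> S" "E v z" using reach_first \<open>y \<noteq> v\<close> by metis
      then show False using \<open>NT = {}\<close> NTS by auto
    qed
    then show "T = {v}" using vT by blast
  qed
  define NW where "NW = {w\<in>W. E v w}"
  define NI where "NI = {w\<in>W. E v w \<and> \<phi>' w = CI}"
  define NF where "NF = {w\<in>W. E v w \<and> \<phi>' w = CF}"
  have finNW: "finite NW" "finite NI" "finite NF" using finW NW_def NI_def NF_def by auto
  have "{u\<in>V. E v u} = NW \<union> NT" using NW_def NTS S_def inV WV by auto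
  moreover have "NW \<inter> NT = {}" using NW_def NTS S_def by auto
  ultimately have cNW: "card NW + card NT = 3" using dg vS S_def finNW finNT
    unfolding degree_def by (metis card_Un_disjoint)
  have col2: "\<And>z. z = CI \<or> z = CF" by (case_tac z) auto
  have "NW = NI \<union> NF" "NI \<inter> NF = {}" unfolding NW_def NI_def NF_def using col2 by auto
  then have cNIF: "card NI + card NF = card NW" using finNW by (metis card_Un_disjoint)
  have cNT: "card NT \<le> 1" using vleaf NT_def by simp
  define c where "c = (if NI = {} then CI else CF)"
  define \<phi>'' where "\<phi>'' = \<phi>'(v := c)"
  have phiW: "\<And>w. w \<in> W \<Longrightarrow> \<phi>'' w = \<phi>' w" using vW \<phi>''_def by auto
  have FT: "F_edges_count E W \<phi>' {v} = card NF"
  proof -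
    have "{(u, w). u \<in> {v} \<and> w \<in> W \<and> E u w \<and> \<phi>' w = CF} = (\<lambda>w. (v, w)) ` NF"
      unfolding NF_def by auto
    then show ?thesis unfolding F_edges_count_def by (simp add: card_image inj_on_def)
  qed
  have NFle: "c = CF \<Longrightarrow> card NF \<le> 1"
  proof -
    assume "c = CF"
    then have NIne: "NI \<noteq> {}" using c_def by (auto split: if_splits)
    then have cNI: "card NI \<ge> 1" using finNW by (simp add: Suc_leI card_gt_0_iff)
    show "card NF \<le> 1"
    proof (cases "NT = {}")
      case False
      then have "card NT = 1" using cNT finNT by (simp add: card_gt_0_iff le_antisym Suc_leI)
      then show ?thesis using cNW cNIF cNI by linarith
    next
      case True
      then have Tv: "T = {v}" using T1 by simp
      have cNW3: "card NW = 3" using cNW True by simp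
      from Tgood show ?thesis
      proof
        assume "F_odd E W \<phi>' T"
        then have "odd (card NF)" using FT Tv unfolding F_odd_def by simp
        moreover have "card NF \<le> 2" using cNI cNIF cNW3 by linarith
        ultimately show ?thesis by presburger
      next
        assume lg: "F_leaf_good E W \<phi>' T"
        then have "x = v" using xT Tv by auto
        then have "card NI \<ge> 2" using xgood lg NI_def by auto
        then show ?thesis using cNIF cNW3 by linarith
      qed
    qed
  qed
  have S'eq: "V - insert v W = S - {v}" using S_def by auto
  have nbI: "independent E {w \<in> W. \<phi>' w = CI}" and nbF: "\<not> has_cycle_in E {w \<in> W. \<phi>' w = CF}"
    using nb unfolding near_bipartite_on_def induces_forest_def by auto
  have NB: "near_bipartite_on E (insert v W) \<phi>''"
  proof (cases "c = CI")
    case True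
    then have NIe: "NI = {}" using c_def by (auto split: if_splits)
    have Iset: "{w \<in> insert v W. \<phi>'' w = CI} = insert v {w \<in> W. \<phi>' w = CI}"
      using True phiW vW \<phi>''_def by auto
    have Fset: "{w \<in> insert v W. \<phi>'' w = CF} = {w \<in> W. \<phi>' w = CF}"
      using True phiW vW \<phi>''_def by auto
    have "independent E (insert v {w \<in> W. \<phi>' w = CI})"
      using nbI NIe NI_def sym irr unfolding independent_def by blast
    then show ?thesis using Iset Fset nbF unfolding near_bipartite_on_def induces_forest_def by simp
  next
    case False
    then have cF: "c = CF" using col2 by blast
    have Iset: "{w \<in> insert v W. \<phi>'' w = CI} = {w \<in> W. \<phi>' w = CI}"
      using cF phiW vW \<phi>''_def by auto
    have Fset: "{w \<in> insert v W. \<phi>'' w = CF} = insert v {w \<in> W. \<phi>' w = CF}"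
      using cF phiW vW \<phi>''_def by auto
    have u: "\<forall>a b. a \<in> {w \<in> W. \<phi>' w = CF} \<longrightarrow> b \<in> {w \<in> W. \<phi>' w = CF} \<longrightarrow> E v a \<longrightarrow> E v b \<longrightarrow> a = b"
      using NFle[OF cF] card_le_Suc0_iff_eq[of NF] finNW NF_def by auto
    show ?thesis using Iset Fset nbI cycle_add[OF nbF sym u]
      unfolding near_bipartite_on_def induces_forest_def by simp
  qed
  have FO: "induces_forest E (V - insert v W)"
    using fo cycle_mono unfolding induces_forest_def by (metis Diff_mono subset_insertI order_refl)
  have DG: "\<forall>u \<in> V - insert v W. degree V E u = 3" using dg by auto
  have compeq: "\<And>x'. x' \<in> S - {v} \<Longrightarrow> {y. reach_in E (S - {v}) x' y} = {y. reach_in E S x' y} - {v}"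
  proof -
    fix x' assume x': "x' \<in> S - {v}"
    show "{y. reach_in E (S - {v}) x' y} = {y. reach_in E S x' y} - {v}"
    proof (intro set_eqI iffI)
      fix y assume "y \<in> {y. reach_in E (S - {v}) x' y}"
      then have r: "reach_in E (S - {v}) x' y" by simp
      then have "y \<in> S - {v}" using reach_in_S x' by metis
      then show "y \<in> {y. reach_in E S x' y} - {v}" using reach_mono r by auto
    next
      fix y assume "y \<in> {y. reach_in E S x' y} - {v}"
      then show "y \<in> {y. reach_in E (S - {v}) x' y}"
        using reach_remove_leaf[OF sym irr uniq] x' by auto
    qed
  qed
  have Icard_mono: "\<And>y. card {w \<in> W. E y w \<and> \<phi>' w = CI} \<le> card {w \<in> insert v W. E y w \<and> \<phi>'' w = CI}"
  proof -
    fix y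
    have "{w \<in> W. E y w \<and> \<phi>' w = CI} \<subseteq> {w \<in> insert v W. E y w \<and> \<phi>'' w = CI}" using phiW by auto
    then show "card {w \<in> W. E y w \<and> \<phi>' w = CI} \<le> card {w \<in> insert v W. E y w \<and> \<phi>'' w = CI}"
      using finW by (intro card_mono) auto
  qed
  have CP: "\<forall>T' \<in> components_of E (V - insert v W). F_odd E (insert v W) \<phi>'' T'
          \<or> F_leaf_good E (insert v W) \<phi>'' T'"
  proof
    fix T' assume "T' \<in> components_of E (V - insert v W)"
    then obtain x' where x': "x' \<in> S - {v}" and T'def: "T' = {y. reach_in E (S - {v}) x' y}"
      unfolding components_of_def S'eq by auto
    have T'eq: "T' = {y. reach_in E S x' y} - {v}" using compeq[OF x'] T'def by simp
    show "F_odd E (insert v W) \<phi>'' T' \<or> F_leaf_good E (insert v W) \<phi>'' T'"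
    proof (cases "x' \<in> T")
      case False
      define T2 where "T2 = {y. reach_in E S x' y}"
      have vT2: "v \<notin> T2"
      proof
        assume "v \<in> T2"
        then have "reach_in E S x' v" unfolding T2_def by simp
        then have "reach_in E S v x'" using reach_sym[OF sym] by blast
        then have "x' \<in> T" using Tchar[OF vT] by auto
        then show False using False by simp
      qed
      have T'T2: "T' = T2" using T'eq vT2 T2_def by auto
      have T2c: "T2 \<in> components_of E S" unfolding components_of_def T2_def using x' by auto
      have T2S: "T2 \<subseteq> S" using reach_in_S x' T2_def by auto
      have T2cl: "\<And>a b. a \<in> T2 \<Longrightarrow> b \<in> S \<Longrightarrow> E a b \<Longrightarrow> b \<in> T2"
      proof -
        fix a b assume ab: "a \<in> T2" "b \<in> S" "E a b"
        then have r: "reach_in E S x' a" unfolding T2_def by simp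
        have "a \<in> S" using reach_in_S[OF r] x' by simp
        then show "b \<in> T2" unfolding T2_def using reach_step[OF r _ ab(2,3)] by simp
      qed
      have Feq: "{(u, w). u \<in> T2 \<and> w \<in> insert v W \<and> E u w \<and> \<phi>'' w = CF}
          = {(u, w). u \<in> T2 \<and> w \<in> W \<and> E u w \<and> \<phi>' w = CF}"
        using T2cl vS vT2 phiW by auto
      from cp T2c S_def have "F_odd E W \<phi>' T2 \<or> F_leaf_good E W \<phi>' T2" by auto
      then show ?thesis
      proof
        assume "F_odd E W \<phi>' T2"
        then show ?thesis using Feq T'T2 unfolding F_odd_def F_edges_count_def by simp
      next
        assume "F_leaf_good E W \<phi>' T2"
        then obtain z where "z \<in> T2" "card {u \<in> T2. E z u} \<le> 1" "card {w \<in> W. E z w \<and> \<phi>' w = CI} \<ge> 2"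
          unfolding F_leaf_good_def by blast
        then show ?thesis using Icard_mono[of z] T'T2 unfolding F_leaf_good_def
          by (metis (no_types, lifting) le_trans)
      qed
    next
      case True
      have T'T: "T' = T - {v}" using T'eq Tchar[OF True] by simp
      have NTne: "NT \<noteq> {}" using T1 True x' by auto
      then have cNT1: "card NT = 1" using cNT finNT by (simp add: card_gt_0_iff le_antisym Suc_leI)
      then obtain u0 where NTu0: "NT = {u0}" by (metis card_1_singletonE)
      show ?thesis
      proof (cases "F_leaf_good E W \<phi>' T")
        case True
        have xv: "x \<noteq> v"
        proof
          assume "x = v"
          then have "NT = {}" using vx NT_def by auto
          then show False using NTne by simp
        qed
        have "card {u \<in> T - {v}. E x u} \<le> card {u \<in> T. E x u}" using finT by (intro card_mono) auto
        then have "x \<in> T' \<and> card {u \<in> T'. E x u} \<le> 1 \<and> card {w \<in> insert v W. E x w \<and> \<phi>'' w = CI} \<ge> 2"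
          using xgood True xv xT T'T Icard_mono[of x] by auto
        then show ?thesis unfolding F_leaf_good_def by blast
      next
        case False
        then have odd: "F_odd E W \<phi>' T" using Tgood by simp
        have NIle: "card NI \<le> 1" using False vT vleaf NI_def unfolding F_leaf_good_def by fastforce
        have cNW2: "card NW = 2" using cNW cNT1 by simp
        define A0 where "A0 = {(u, w). u \<in> T - {v} \<and> w \<in> W \<and> E u w \<and> \<phi>' w = CF}"
        have finA0: "finite A0" using finite_cartesian_product[OF finT finW]
          by (rule finite_subset[rotated]) (auto simp: A0_def)
        have Aeq: "{(u, w). u \<in> T \<and> w \<in> W \<and> E u w \<and> \<phi>' w = CF} = A0 \<union> (\<lambda>w. (v, w)) ` NF"
          unfolding A0_def NF_def using vT by auto
        have cA: "F_edges_count E W \<phi>' T = card A0 + card NF"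
          unfolding F_edges_count_def Aeq using finA0 finNW
          by (subst card_Un_disjoint) (auto simp: A0_def card_image inj_on_def)
        have A''eq: "{(u, w). u \<in> T' \<and> w \<in> insert v W \<and> E u w \<and> \<phi>'' w = CF}
            = A0 \<union> (if c = CF then {(u0, v)} else {})"
        proof (intro set_eqI iffI)
          fix p assume "p \<in> {(u, w). u \<in> T' \<and> w \<in> insert v W \<and> E u w \<and> \<phi>'' w = CF}"
          then obtain u w where p: "p = (u, w)" "u \<in> T - {v}" "w \<in> insert v W" "E u w" "\<phi>'' w = CF"
            using T'T by auto
          show "p \<in> A0 \<union> (if c = CF then {(u0, v)} else {})"
          proof (cases "w = v")
            case True
            then have "u \<in> NT" using p sym NT_def by auto
            then have "u = u0" using NTu0 by simp
            moreover have "c = CF" using p True \<phi>''_def by simp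
            ultimately show ?thesis using p True by simp
          next
            case False
            then show ?thesis using p phiW A0_def by auto
          qed
        next
          fix p assume p: "p \<in> A0 \<union> (if c = CF then {(u0, v)} else {})"
          have "u0 \<in> T" "E v u0" using NTu0 NT_def by auto
          then have "u0 \<in> T - {v}" "E u0 v" using irr sym by auto
          then show "p \<in> {(u, w). u \<in> T' \<and> w \<in> insert v W \<and> E u w \<and> \<phi>'' w = CF}"
            using p phiW vW T'T A0_def \<phi>''_def by (auto split: if_splits)
        qed
        have v0: "(u0, v) \<notin> A0" using vW A0_def by auto
        have cA'': "F_edges_count E (insert v W) \<phi>'' T' = card A0 + (if c = CF then 1 else 0)"
          unfolding F_edges_count_def A''eq using finA0 v0 by auto
        have "F_odd E (insert v W) \<phi>'' T'"
        proof (cases "NI = {}")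
          case True
          then have "c = CI" "card NF = 2" using c_def cNIF cNW2 by auto
          then show ?thesis using odd cA cA'' unfolding F_odd_def by simp
        next
          case False
          then have "card NI \<ge> 1" using finNW(2) by (simp add: Suc_le_eq card_gt_0_iff)
          then have "card NF = 1" "c = CF" using cNIF cNW2 NIle False c_def by auto
          then show ?thesis using odd cA cA'' unfolding F_odd_def by simp
        qed
        then show ?thesis by simp
      qed
    qed
  qed
  show ?thesis
    apply (rule exI[of _ v], rule exI[of _ c])
    using vS S_def WV NB FO DG CP \<phi>''_def by auto
qed


theorem lemma4p35:
  fixes V W :: "'a set" and E :: "'a \<Rightarrow> 'a \<Rightarrow> bool" and \<phi>' :: "'a \<Rightarrow> color"
  assumes "simple_graph V E"
    and "W \<subseteq> V"
    and "near_bipartite_on E W \<phi>'"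
    and "induces_forest E (V - W)"
    and "\<forall>v \<in> V - W. degree V E v = 3"
    and "\<forall>T \<in> components_of E (V - W). F_odd E W \<phi>' T \<or> F_leaf_good E W \<phi>' T"
  shows "\<exists>\<phi>. (\<forall>w\<in>W. \<phi> w = \<phi>' w) \<and> near_bipartite_on E V \<phi>"
  using assms
proof (induction "card (V - W)" arbitrary: W \<phi>' rule: less_induct)
  case less
  show ?case
  proof (cases "V - W = {}")
    case True
    then have "W = V" using less.prems(2) by auto
    then show ?thesis using less.prems(3) by auto
  next
    case False
    obtain v c where v: "v \<in> V - W" and h: "insert v W \<subseteq> V"
      "near_bipartite_on E (insert v W) (\<phi>'(v := c))"
      "induces_forest E (V - insert v W)" "\<forall>u \<in> V - insert v W. degree V E u = 3"
      "\<forall>T \<in> components_of E (V - insert v W). F_odd E (insert v W) (\<phi>'(v := c)) T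
          \<or> F_leaf_good E (insert v W) (\<phi>'(v := c)) T"
      using step[OF less.prems False] by blast
    have finV: "finite V" using less.prems(1) unfolding simple_graph_def by simp
    have "card (V - insert v W) < card (V - W)" using v finV
      by (metis Diff_insert card_Diff1_less finite_Diff)
    then obtain \<phi> where p1: "\<forall>w\<in>insert v W. \<phi> w = (\<phi>'(v := c)) w" and p2: "near_bipartite_on E V \<phi>"
      using less.hyps[OF _ less.prems(1) h] by blast
    have "\<forall>w\<in>W. \<phi> w = \<phi>' w" using p1 v by auto
    then show ?thesis using p2 by blast
  qed
qed

end
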